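(* Let $f:\mathbb{R}^n\to\mathbb{R}^n$ be locally Lipschitz, and let $V_1,V_2\in C^1(\mathbb{R}^n)$, continuous $N_1,N_2:\mathbb{R}^n\to[0,\infty)$, and continuous $h:[0,\infty)\to[0,\infty)$ with $h(0)=0$ and $\sup_{r>0}h(r)/r<\infty$ satisfy $\nabla V_1\cdot f\le -N_1$ and $\nabla V_2\cdot f\le -N_2+h(N_1)$ on $\mathbb{R}^n$. Let $E:=\{x\in\mathbb{R}^n:N_1(x)=0,\ N_2(x)=0\}$. Let $x(\cdot)$ be a bounded solution defined on $[0,\infty)$ such that $t\mapsto N_i(x(t))$ is uniformly continuous on $[0,\infty)$ for $i=1,2$. Then $\operatorname{dist}(x(t),E)\to0$ as $t\to\infty$.
   Context: $\operatorname{dist}(x,E)=\inf_{e\in E}\|x-e\|$. *)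

theory Defs
  imports "HOL-Analysis.Analysis"
begin

definition locally_lipschitz :: "('a::metric_space \<Rightarrow> 'b::metric_space) \<Rightarrow> bool" where
  "locally_lipschitz f \<longleftrightarrow> (\<forall>x. \<exists>r>0. \<exists>L. L-lipschitz_on (cball x r) f)"

end

theory Submission
  imports Defs
begin

lemma decr_aux:
  fixes U U' :: "real \<Rightarrow> real"
  assumes der: "\<And>\<tau>. \<tau> \<ge> 0 \<Longrightarrow> (U has_real_derivative U' \<tau>) (at \<tau> within {0..})"
    and st: "0 \<le> s" "s \<le> t" and bd: "\<And>\<tau>. s \<le> \<tau> \<Longrightarrow> \<tau> \<le> t \<Longrightarrow> U' \<tau> \<le> -e"
  shows "U t + e*(t-s) \<le> U s"
proof -
  have "\<exists>\<xi>\<in>{s..t}. U t - U s = (\<lambda>h. U' \<xi> * h) (t - s)"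
  proof (rule mvt_very_simple[OF st(2)])
    fix \<xi> assume "s \<le> \<xi>" "\<xi> \<le> t"
    then have "(U has_real_derivative U' \<xi>) (at \<xi> within {0..})" using der st by auto
    then have "(U has_real_derivative U' \<xi>) (at \<xi> within {s..t})"
      by (rule DERIV_subset) (use st in auto)
    then show "(U has_derivative (\<lambda>h. U' \<xi> * h)) (at \<xi> within {s..t})"
      by (simp add: has_field_derivative_def)
  qed
  then obtain \<xi> where "\<xi> \<in> {s..t}" "U t - U s = U' \<xi> * (t - s)" by auto
  moreover have "U' \<xi> * (t - s) \<le> -e * (t - s)"
    using bd[of \<xi>] \<open>\<xi> \<in> {s..t}\<close> st by (intro mult_right_mono) auto
  ultimately show ?thesis by (simp add: algebra_simps)
qed

lemma barbalat_aux:
  fixes U U' N :: "real \<Rightarrow> real"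
  assumes der: "\<And>\<tau>. \<tau> \<ge> 0 \<Longrightarrow> (U has_real_derivative U' \<tau>) (at \<tau> within {0..})"
    and dle: "\<And>\<tau>. \<tau> \<ge> 0 \<Longrightarrow> U' \<tau> \<le> - N \<tau>"
    and Nnn: "\<And>\<tau>. N \<tau> \<ge> 0"
    and lb: "\<And>\<tau>. \<tau> \<ge> 0 \<Longrightarrow> B \<le> U \<tau>"
    and uc: "uniformly_continuous_on {0..} N"
  shows "(N \<longlongrightarrow> 0) at_top"
proof (rule tendstoI)
  fix \<epsilon> :: real assume ep: "\<epsilon> > 0"
  define L where "L = Inf (U ` {0..})"
  have bb: "bdd_below (U ` {0..})" using lb by (auto intro!: bdd_belowI)
  have Lle: "L \<le> U \<tau>" if "\<tau> \<ge> 0" for \<tau>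
    unfolding L_def using bb that by (intro cInf_lower) auto
  have mono: "U t \<le> U s" if "0 \<le> s" "s \<le> t" for s t
    using decr_aux[OF der that, of 0] dle Nnn that
    by (smt (verit))
  obtain \<delta> where dp: "\<delta> > 0" and dd: "\<forall>a\<in>{0..}. \<forall>b\<in>{0..}. dist b a < \<delta> \<longrightarrow> dist (N b) (N a) < \<epsilon>/2"
    using uc ep unfolding uniformly_continuous_on_def by (meson half_gt_zero)
  define d where "d = \<delta>/2"
  have d: "d > 0" "d < \<delta>" using dp by (auto simp: d_def)
  have "L < L + \<epsilon>*d/4" using ep d by simp
  then have "\<exists>T\<in>{0..}. U T < L + \<epsilon>*d/4"
    unfolding L_def by (subst (asm) cInf_less_iff) (use bb in auto)
  then obtain T where T: "T \<ge> 0" "U T < L + \<epsilon>*d/4" by auto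
  have "\<forall>t\<ge>T. dist (N t) 0 < \<epsilon>"
  proof (intro allI impI, rule ccontr)
    fix t assume tT: "t \<ge> T" and "\<not> dist (N t) 0 < \<epsilon>"
    then have Nt: "N t \<ge> \<epsilon>" using Nnn[of t] by simp
    have "U' \<tau> \<le> -(\<epsilon>/2)" if "t \<le> \<tau>" "\<tau> \<le> t + d" for \<tau>
    proof -
      have "dist \<tau> t < \<delta>" using that d by (simp add: dist_real_def)
      then have "dist (N \<tau>) (N t) < \<epsilon>/2" using dd that tT T by auto
      then have "N \<tau> \<ge> \<epsilon>/2" using Nt abs_ge_minus_self[of "N \<tau> - N t"] unfolding dist_real_def by linarith
      then show ?thesis using dle[of \<tau>] that tT T by simp
    qed
    then have "U (t+d) + (\<epsilon>/2)*((t+d)-t) \<le> U t"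
      using tT T d by (intro decr_aux[OF der]) auto
    moreover have "U t \<le> U T" using mono tT T by auto
    moreover have "L \<le> U (t+d)" using Lle tT T d by auto
    moreover have "(\<epsilon>/2)*((t+d)-t) = \<epsilon>*d/2" by simp
    moreover have "\<epsilon>*d > 0" using ep d by simp
    ultimately show False using T by linarith
  qed
  then show "\<forall>\<^sub>F t in at_top. dist (N t) 0 < \<epsilon>"
    unfolding eventually_at_top_linorder by blast
qed

theorem theorem2p4:
  fixes f :: "'a::euclidean_space \<Rightarrow> 'a"
    and V1 V2 N1 N2 :: "'a \<Rightarrow> real"
    and gV1 gV2 :: "'a \<Rightarrow> 'a"
    and h :: "real \<Rightarrow> real"
    and x :: "real \<Rightarrow> 'a"
  assumes f_loclip: "locally_lipschitz f"
    and V1_grad: "\<And>y. (V1 has_derivative (\<lambda>v. gV1 y \<bullet> v)) (at y)"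
    and V1_C1: "continuous_on UNIV gV1"
    and V2_grad: "\<And>y. (V2 has_derivative (\<lambda>v. gV2 y \<bullet> v)) (at y)"
    and V2_C1: "continuous_on UNIV gV2"
    and N1_cont: "continuous_on UNIV N1" and N1_nonneg: "\<And>y. N1 y \<ge> 0"
    and N2_cont: "continuous_on UNIV N2" and N2_nonneg: "\<And>y. N2 y \<ge> 0"
    and h_cont: "continuous_on {0..} h" and h_nonneg: "\<And>r. r \<ge> 0 \<Longrightarrow> h r \<ge> 0"
    and h_zero: "h 0 = 0"
    and h_lin: "bdd_above ((\<lambda>r. h r / r) ` {0<..})"
    and dV1: "\<And>y. gV1 y \<bullet> f y \<le> - N1 y"
    and dV2: "\<And>y. gV2 y \<bullet> f y \<le> - N2 y + h (N1 y)"
    and sol: "\<And>t. t \<ge> 0 \<Longrightarrow> (x has_vector_derivative f (x t)) (at t within {0..})"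
    and bdd: "bounded (x ` {0..})"
    and uc1: "uniformly_continuous_on {0..} (\<lambda>t. N1 (x t))"
    and uc2: "uniformly_continuous_on {0..} (\<lambda>t. N2 (x t))"
  shows "{y. N1 y = 0 \<and> N2 y = 0} \<noteq> {} \<and>
         ((\<lambda>t. infdist (x t) {y. N1 y = 0 \<and> N2 y = 0}) \<longlongrightarrow> 0) at_top"
proof -
  obtain M where M: "\<And>r. r > 0 \<Longrightarrow> h r / r \<le> M"
    using h_lin unfolding bdd_above_def by auto
  define c where "c = max 0 M"
  have c0: "c \<ge> 0" by (simp add: c_def)
  have hc: "h r \<le> c * r" if "r \<ge> 0" for r
  proof (cases "r = 0")
    case True then show ?thesis using h_zero by simp
  next
    case False
    then have "r > 0" using that by simp
    then have "h r \<le> M * r" using M[of r] by (simp add: divide_le_eq)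
    also have "\<dots> \<le> c * r" using \<open>r > 0\<close> by (intro mult_right_mono) (auto simp: c_def)
    finally show ?thesis .
  qed
  define D1 where "D1 = (\<lambda>t. gV1 (x t) \<bullet> f (x t))"
  define D2 where "D2 = (\<lambda>t. gV2 (x t) \<bullet> f (x t))"
  have dx: "(x has_derivative (\<lambda>s. s *\<^sub>R f (x t))) (at t within {0..})" if "t \<ge> 0" for t
    using sol[OF that] by (simp add: has_vector_derivative_def)
  have d1: "((\<lambda>t. V1 (x t)) has_real_derivative D1 t) (at t within {0..})" if "t \<ge> 0" for t
  proof -
    have "((\<lambda>t. V1 (x t)) has_derivative (\<lambda>s. gV1 (x t) \<bullet> (s *\<^sub>R f (x t)))) (at t within {0..})"
      by (rule has_derivative_compose[OF dx[OF that] V1_grad])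
    moreover have "(\<lambda>s. gV1 (x t) \<bullet> (s *\<^sub>R f (x t))) = (*) (D1 t)"
      by (auto simp: fun_eq_iff D1_def mult.commute)
    ultimately show ?thesis by (simp add: has_field_derivative_def)
  qed
  have d2: "((\<lambda>t. V2 (x t)) has_real_derivative D2 t) (at t within {0..})" if "t \<ge> 0" for t
  proof -
    have "((\<lambda>t. V2 (x t)) has_derivative (\<lambda>s. gV2 (x t) \<bullet> (s *\<^sub>R f (x t)))) (at t within {0..})"
      by (rule has_derivative_compose[OF dx[OF that] V2_grad])
    moreover have "(\<lambda>s. gV2 (x t) \<bullet> (s *\<^sub>R f (x t))) = (*) (D2 t)"
      by (auto simp: fun_eq_iff D2_def mult.commute)
    ultimately show ?thesis by (simp add: has_field_derivative_def)
  qed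
  define K where "K = closure (x ` {0..})"
  have K: "compact K" unfolding K_def using bdd by (simp add: compact_eq_bounded_closed bounded_closure)
  have xK: "x t \<in> K" if "t \<ge> 0" for t unfolding K_def using that closure_subset by (meson atLeast_iff image_eqI subsetD)
  have cV1: "continuous_on UNIV V1"
    by (rule has_derivative_continuous_on[of UNIV V1 "\<lambda>y v. gV1 y \<bullet> v"]) (use V1_grad in auto)
  have cV2: "continuous_on UNIV V2"
    by (rule has_derivative_continuous_on[of UNIV V2 "\<lambda>y v. gV2 y \<bullet> v"]) (use V2_grad in auto)
  have "bounded (V1 ` K)"
    by (rule compact_imp_bounded[OF compact_continuous_image[OF continuous_on_subset[OF cV1 subset_UNIV] K]])
  then obtain B1 where B1: "\<And>y. y \<in> K \<Longrightarrow> \<bar>V1 y\<bar> \<le> B1" unfolding bounded_real by auto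
  have "bounded (V2 ` K)"
    by (rule compact_imp_bounded[OF compact_continuous_image[OF continuous_on_subset[OF cV2 subset_UNIV] K]])
  then obtain B2 where B2: "\<And>y. y \<in> K \<Longrightarrow> \<bar>V2 y\<bar> \<le> B2" unfolding bounded_real by auto
  have lim1: "((\<lambda>t. N1 (x t)) \<longlongrightarrow> 0) at_top"
  proof (rule barbalat_aux[where U="\<lambda>t. V1 (x t)" and U'=D1 and B="-B1"])
    show "\<And>\<tau>. 0 \<le> \<tau> \<Longrightarrow> ((\<lambda>t. V1 (x t)) has_real_derivative D1 \<tau>) (at \<tau> within {0..})" by (rule d1)
    show "\<And>\<tau>. 0 \<le> \<tau> \<Longrightarrow> D1 \<tau> \<le> - N1 (x \<tau>)" using dV1 by (simp add: D1_def)
    show "\<And>\<tau>. 0 \<le> N1 (x \<tau>)" by (rule N1_nonneg)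
    show "- B1 \<le> V1 (x \<tau>)" if "0 \<le> \<tau>" for \<tau> using B1[OF xK[OF that]] by (auto simp: abs_le_iff)
    show "uniformly_continuous_on {0..} (\<lambda>t. N1 (x t))" by (rule uc1)
  qed
  have lim2: "((\<lambda>t. N2 (x t)) \<longlongrightarrow> 0) at_top"
  proof (rule barbalat_aux[where U="\<lambda>t. V2 (x t) + c * V1 (x t)" and U'="\<lambda>t. D2 t + c * D1 t" and B="-B2 - c*B1"])
    show "\<And>\<tau>. 0 \<le> \<tau> \<Longrightarrow> ((\<lambda>t. V2 (x t) + c * V1 (x t)) has_real_derivative D2 \<tau> + c * D1 \<tau>) (at \<tau> within {0..})"
      using d1 d2 by (intro DERIV_add DERIV_cmult) auto
    show "D2 \<tau> + c * D1 \<tau> \<le> - N2 (x \<tau>)" if "0 \<le> \<tau>" for \<tau>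
    proof -
      have "D2 \<tau> \<le> - N2 (x \<tau>) + c * N1 (x \<tau>)"
        using dV2[of "x \<tau>"] hc[OF N1_nonneg[of "x \<tau>"]] by (simp add: D2_def)
      moreover have "c * D1 \<tau> \<le> c * (- N1 (x \<tau>))"
        using dV1[of "x \<tau>"] c0 by (intro mult_left_mono) (auto simp: D1_def)
      ultimately show ?thesis by simp
    qed
    show "\<And>\<tau>. 0 \<le> N2 (x \<tau>)" by (rule N2_nonneg)
    show "- B2 - c * B1 \<le> V2 (x \<tau>) + c * V1 (x \<tau>)" if "0 \<le> \<tau>" for \<tau>
    proof -
      have "-B2 \<le> V2 (x \<tau>)" using B2[OF xK[OF that]] by simp
      moreover have "c * (-B1) \<le> c * V1 (x \<tau>)" using B1[OF xK[OF that]] c0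
        by (intro mult_left_mono) auto
      ultimately show ?thesis by simp
    qed
    show "uniformly_continuous_on {0..} (\<lambda>t. N2 (x t))" by (rule uc2)
  qed
  define E where "E = {y. N1 y = 0 \<and> N2 y = 0}"
  have key: "\<exists>y r. y \<in> E \<and> strict_mono (r::nat\<Rightarrow>nat) \<and> (\<lambda>n. x (s (r n))) \<longlonglongrightarrow> y"
    if s0: "\<And>n. s n \<ge> 0" and sl: "filterlim s at_top sequentially" for s :: "nat \<Rightarrow> real"
  proof -
    have "seq_compact K" using K by (rule compact_imp_seq_compact)
    then obtain y r where y: "y \<in> K" "strict_mono (r::nat\<Rightarrow>nat)" "((\<lambda>n. x (s n)) \<circ> r) \<longlonglongrightarrow> y"
      using seq_compactE[OF \<open>seq_compact K\<close>, of "\<lambda>n. x (s n)"] xK s0 by blast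
    have xl: "(\<lambda>n. x (s (r n))) \<longlonglongrightarrow> y" using y(3) by (simp add: o_def)
    have srl: "filterlim (\<lambda>n. s (r n)) at_top sequentially"
      using filterlim_compose[OF sl filterlim_subseq[OF y(2)]] by (simp add: o_def)
    have "(\<lambda>n. N1 (x (s (r n)))) \<longlonglongrightarrow> N1 y"
      using N1_cont by (intro isCont_tendsto_compose[OF _ xl]) (simp add: continuous_on_eq_continuous_at)
    moreover have "(\<lambda>n. N1 (x (s (r n)))) \<longlonglongrightarrow> 0"
      using filterlim_compose[OF lim1 srl] by simp
    ultimately have "N1 y = 0" using LIMSEQ_unique by blast
    have "(\<lambda>n. N2 (x (s (r n)))) \<longlonglongrightarrow> N2 y"
      using N2_cont by (intro isCont_tendsto_compose[OF _ xl]) (simp add: continuous_on_eq_continuous_at)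
    moreover have "(\<lambda>n. N2 (x (s (r n)))) \<longlonglongrightarrow> 0"
      using filterlim_compose[OF lim2 srl] by simp
    ultimately have "N2 y = 0" using LIMSEQ_unique by blast
    show ?thesis using \<open>N1 y = 0\<close> \<open>N2 y = 0\<close> y(2) xl unfolding E_def by blast
  qed
  have ne: "E \<noteq> {}"
    using key[of real] filterlim_real_sequentially by auto
  have "((\<lambda>t. infdist (x t) E) \<longlongrightarrow> 0) at_top"
  proof (rule tendstoI, rule ccontr)
    fix \<epsilon> :: real assume ep: "\<epsilon> > 0" and ne2: "\<not> (\<forall>\<^sub>F t in at_top. dist (infdist (x t) E) 0 < \<epsilon>)"
    have "\<forall>n::nat. \<exists>t. t \<ge> real n \<and> infdist (x t) E \<ge> \<epsilon>"
    proof
      fix n :: nat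
      from ne2 have "\<not> (\<forall>t\<ge>real n. dist (infdist (x t) E) 0 < \<epsilon>)"
        unfolding eventually_at_top_linorder by blast
      then show "\<exists>t. t \<ge> real n \<and> infdist (x t) E \<ge> \<epsilon>"
        by (auto simp: not_less) (metis abs_of_nonneg infdist_nonneg)
    qed
    then obtain s where s: "\<And>n. s n \<ge> real n" "\<And>n. infdist (x (s n)) E \<ge> \<epsilon>" by metis
    have s0: "\<And>n. s n \<ge> 0" using s(1) of_nat_0_le_iff order_trans by blast
    have sl: "filterlim s at_top sequentially"
      by (rule filterlim_at_top_mono[OF filterlim_real_sequentially]) (use s(1) in auto)
    obtain y r where y: "y \<in> E" "strict_mono (r::nat\<Rightarrow>nat)" "(\<lambda>n. x (s (r n))) \<longlonglongrightarrow> y"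
      using key[OF s0 sl] by blast
    have "(\<lambda>n. infdist (x (s (r n))) E) \<longlonglongrightarrow> infdist y E"
      by (rule tendsto_infdist[OF y(3)])
    then have "\<epsilon> \<le> infdist y E" by (rule LIMSEQ_le_const) (use s(2) in auto)
    then show False using y(1) ep by simp
  qed
  then show ?thesis using ne unfolding E_def by blast
qed

end
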